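(* With the notation of the context, for all $f\neq f'$ in $[n]$, all $0\le r<d$, all $\lambda\ge0$, and every fixed choice of $(\sigma_1,b_1),\dots,(\sigma_r,b_r)$, \[h_r(f,f';\sigma_1,b_1,\dots,\sigma_r,b_r)\ge\mathbb{E}_{\sigma_{r+1},b_{r+1}}\,h_{r+1}(f,f';\sigma_1,b_1,\dots,\sigma_r,b_r,\sigma_{r+1},b_{r+1}),\] where $\sigma_{r+1}$ is uniform among odd integers in $[n]$ and $b_{r+1}$ is independently uniform in $[n]$.
   Context: $n,B$ are powers of $2$ with $2\le B\le n$, $F\ge2$ even, $\epsilon=(1/4)^{F-1}$, and $\hat G$ is a flat filter with $B$ buckets and sharpness $F$: a sequence in $\mathbb{R}^n$ indexed by $\mathbb{Z}_n$ (representatives in $\{-n/2,\dots,n/2-1\}$), symmetric about $0$, with $\hat G_f\in[0,1]$ for all $f$, $\hat G_f\ge1-\epsilon$ for $|f|\le n/(2B)$, and $\hat G_f\le\epsilon\,(n/(B|f|))^{F-1}$ for $|f|\ge n/B$. $M(\lambda)=e^{\lambda\epsilon}[(2/B+1/n)(e^{\lambda(1-\epsilon)}-1)+1]$. For $\sigma,b\in[n]$: $\pi_{\sigma,b}(f)=\sigma(f-b)\bmod n$, $h_{\sigma,b}(f)=\lfloor(B/n)\pi_{\sigma,b}(f)+1/2\rfloor$, $o_{f,\sigma,b}(f')=\pi_{\sigma,b}(f')-(n/B)h_{\sigma,b}(f)\bmod n$; $o_{f,\ell}$ abbreviates $o_{f,\sigma_\ell,b_\ell}$. For $d\ge1$,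 $\beta>0$: $h_r(f,f';\sigma_1,b_1,\dots,\sigma_r,b_r)=e^{-\lambda\beta}\exp(\lambda\sum_{\ell=1}^r\hat G_{o_{f,\ell}(f')})M(\lambda)^{d-r}$. *)

theory Defs
  imports Complex_Main
begin

text \<open>Elements of Z_n are represented by naturals in {0..<n} = [n].
  The signed representative of f in {-n/2, ..., n/2-1}.\<close>
definition zrep :: "nat \<Rightarrow> nat \<Rightarrow> int" where
  "zrep n f = (if f < n div 2 then int f else int f - int n)"

definition flat_eps :: "nat \<Rightarrow> real" where
  "flat_eps F = (1/4) ^ (F - 1)"

definition flat_filter :: "nat \<Rightarrow> nat \<Rightarrow> nat \<Rightarrow> (nat \<Rightarrow> real) \<Rightarrow> bool" where
  "flat_filter n B F G \<longleftrightarrow>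
     (\<forall>f<n. G ((n - f) mod n) = G f) \<and>
     (\<forall>f<n. 0 \<le> G f \<and> G f \<le> 1) \<and>
     (\<forall>f<n. real_of_int \<bar>zrep n f\<bar> \<le> real n / (2 * real B) \<longrightarrow> G f \<ge> 1 - flat_eps F) \<and>
     (\<forall>f<n. real_of_int \<bar>zrep n f\<bar> \<ge> real n / real B \<longrightarrow>
            G f \<le> flat_eps F * (real n / (real B * real_of_int \<bar>zrep n f\<bar>)) ^ (F - 1))"

definition Mfun :: "nat \<Rightarrow> nat \<Rightarrow> nat \<Rightarrow> real \<Rightarrow> real" where
  "Mfun n B F lam = exp (lam * flat_eps F) *
     ((2 / real B + 1 / real n) * (exp (lam * (1 - flat_eps F)) - 1) + 1)"

definition perm_pi :: "nat \<Rightarrow> nat \<Rightarrow> nat \<Rightarrow> nat \<Rightarrow> int" where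
  "perm_pi n \<sigma> b f = (int \<sigma> * (int f - int b)) mod int n"

definition hash_h :: "nat \<Rightarrow> nat \<Rightarrow> nat \<Rightarrow> nat \<Rightarrow> nat \<Rightarrow> int" where
  "hash_h n B \<sigma> b f = \<lfloor>(real B / real n) * real_of_int (perm_pi n \<sigma> b f) + 1/2\<rfloor>"

text \<open>o_{f,sigma,b}(f'), an element of [n]; n/B is an integer since B divides n.\<close>
definition offset_o :: "nat \<Rightarrow> nat \<Rightarrow> nat \<Rightarrow> nat \<Rightarrow> nat \<Rightarrow> nat \<Rightarrow> nat" where
  "offset_o n B f \<sigma> b f' =
     nat ((perm_pi n \<sigma> b f' - int (n div B) * hash_h n B \<sigma> b f) mod int n)"

text \<open>h_r with the list sb = [(sigma_1,b_1),...,(sigma_r,b_r)], r = length sb.\<close>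
definition h_r :: "nat \<Rightarrow> nat \<Rightarrow> nat \<Rightarrow> (nat \<Rightarrow> real) \<Rightarrow> nat \<Rightarrow> real \<Rightarrow> real \<Rightarrow>
                   nat \<Rightarrow> nat \<Rightarrow> (nat \<times> nat) list \<Rightarrow> real" where
  "h_r n B F G d \<beta> lam f f' sb =
     exp (- lam * \<beta>) * exp (lam * (\<Sum>p\<leftarrow>sb. G (offset_o n B f (fst p) (snd p) f')))
       * Mfun n B F lam ^ (d - length sb)"

definition odd_res :: "nat \<Rightarrow> nat set" where
  "odd_res n = {\<sigma>. \<sigma> < n \<and> odd \<sigma>}"

end

theory Submission imports Defs begin

lemma card_cong_le:
  fixes m n :: nat and c :: int
  assumes "m > 0" "m dvd n"
  shows "card {x. x < n \<and> int m dvd (int x - c)} \<le> n div m"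
proof -
  let ?S = "{x. x < n \<and> int m dvd (int x - c)}"
  have inj: "inj_on (\<lambda>x. x div m) ?S"
  proof (rule inj_onI)
    fix x y assume x: "x \<in> ?S" and y: "y \<in> ?S" and e: "x div m = y div m"
    have "int m dvd (int x - c) - (int y - c)" by (rule dvd_diff) (use x y in auto)
    hence "int m dvd int x - int y" by simp
    hence "int x mod int m = int y mod int m" by (simp add: mod_eq_dvd_iff)
    hence "x mod m = y mod m" by (metis of_nat_eq_iff of_nat_mod)
    thus "x = y" using e by (metis div_mult_mod_eq)
  qed
  have img: "(\<lambda>x. x div m) ` ?S \<subseteq> {..<n div m}"
  proof
    fix z assume "z \<in> (\<lambda>x. x div m) ` ?S"
    then obtain x where "x < n" "z = x div m" by auto
    moreover obtain q where "n = m * q" using assms(2) by auto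
    ultimately show "z \<in> {..<n div m}" using assms(1)
      by (simp add: less_mult_imp_div_less mult.commute)
  qed
  have "card ?S \<le> card {..<n div m}" by (rule card_inj_on_le[OF inj img]) simp
  thus ?thesis by simp
qed

lemma card_sigma_le:
  fixes n k s :: nat and u z :: int
  assumes n: "n = 2 ^ k" and s: "s < k" and u: "odd u"
  shows "card {\<sigma> \<in> odd_res n. int n dvd (int \<sigma> * (2^s * u) - z)}
     \<le> (if (2::int)^(s+1) dvd (z - 2^s) then 2^s else 0)"
proof (cases "{\<sigma> \<in> odd_res n. int n dvd (int \<sigma> * (2^s * u) - z)} = {}")
  case True thus ?thesis by (metis card.empty zero_le)
next
  case False
  let ?S = "{\<sigma> \<in> odd_res n. int n dvd (int \<sigma> * (2^s * u) - z)}"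
  from False obtain s0 where s0: "s0 \<in> ?S" by blast
  have sk: "(2::int)^(s+1) dvd int n" using n s
    by (metis Suc_eq_plus1 Suc_leI le_imp_power_dvd of_nat_numeral of_nat_power of_nat_dvd_iff)
  have d1: "(2::int)^(s+1) dvd (int s0 * (2^s * u) - z)"
    using s0 sk dvd_trans by blast
  have "odd (int s0 * u)" using s0 u by (simp add: odd_res_def)
  then obtain w where w: "int s0 * u = 2 * w + 1" by (metis oddE)
  have "int s0 * (2^s * u) - 2^s = 2^s * (int s0 * u) - 2^s" by (simp add: ac_simps)
  also have "\<dots> = 2^(s+1) * w" unfolding w by (simp add: algebra_simps)
  finally have "int s0 * (2^s * u) - 2^s = 2^(s+1) * w" .
  hence d2: "(2::int)^(s+1) dvd (int s0 * (2^s * u) - 2^s)" by simp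
  have cond: "(2::int)^(s+1) dvd (z - 2^s)"
  proof -
    have "z - 2^s = (int s0 * (2^s * u) - 2^s) - (int s0 * (2^s * u) - z)" by simp
    thus ?thesis using d1 d2 by (metis dvd_diff)
  qed
  have sub: "?S \<subseteq> {x. x < n \<and> int (2^(k-s)) dvd (int x - int s0)}"
  proof
    fix x assume x: "x \<in> ?S"
    have "int n dvd (int x * (2^s * u) - z) - (int s0 * (2^s * u) - z)"
      by (rule dvd_diff) (use x s0 in auto)
    hence "int n dvd 2^s * ((int x - int s0) * u)" by (simp add: algebra_simps)
    moreover have "int n = 2^s * 2^(k-s)" using n s by (simp add: power_add[symmetric])
    ultimately have "(2::int)^(k-s) dvd (int x - int s0) * u" by simp
    moreover have "coprime ((2::int)^(k-s)) u" using u by simp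
    ultimately have "(2::int)^(k-s) dvd (int x - int s0)"
      using coprime_dvd_mult_left_iff by blast
    thus "x \<in> {x. x < n \<and> int (2^(k-s)) dvd (int x - int s0)}"
      using x by (simp add: odd_res_def)
  qed
  have "card ?S \<le> card {x. x < n \<and> int (2^(k-s)) dvd (int x - int s0)}"
    by (rule card_mono[OF _ sub]) simp
  also have "\<dots> \<le> n div 2^(k-s)"
    by (rule card_cong_le) (use n s in \<open>auto simp: le_imp_power_dvd\<close>)
  also have "n div 2^(k-s) = 2^s"
  proof -
    have "n = 2^(k-s) * 2^s" using n s by (metis le_add_diff_inverse2 less_imp_le power_add)
    thus ?thesis by simp
  qed
  finally show ?thesis using cond by simp
qed

lemma perm_inj:
  fixes n k \<sigma> f :: nat
  assumes n: "n = 2 ^ k" and o: "odd \<sigma>"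
  shows "inj_on (\<lambda>b. nat (perm_pi n \<sigma> b f)) {..<n}"
proof (rule inj_onI)
  fix b b' assume b: "b \<in> {..<n}" and b': "b' \<in> {..<n}"
    and e: "nat (perm_pi n \<sigma> b f) = nat (perm_pi n \<sigma> b' f)"
  have np: "int n > 0" using n by simp
  have "perm_pi n \<sigma> b f = perm_pi n \<sigma> b' f"
    using e np unfolding perm_pi_def by (simp add: nat_eq_iff2)
  hence "(int \<sigma> * (int f - int b)) mod int n = (int \<sigma> * (int f - int b')) mod int n"
    unfolding perm_pi_def .
  hence "int n dvd int \<sigma> * (int f - int b) - int \<sigma> * (int f - int b')"
    by (simp add: mod_eq_dvd_iff)
  hence "int n dvd int \<sigma> * (int b' - int b)" by (simp add: algebra_simps)
  moreover have "coprime (int n) (int \<sigma>)" using n o by simp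
  ultimately have d: "int n dvd (int b' - int b)" using coprime_dvd_mult_right_iff
    by (metis mult.commute coprime_dvd_mult_left_iff)
  show "b = b'"
  proof (rule ccontr)
    assume "b \<noteq> b'"
    hence "int b' - int b \<noteq> 0" by simp
    from dvd_imp_le_int[OF this d] have "int n \<le> \<bar>int b' - int b\<bar>" by simp
    thus False using b b' by auto
  qed
qed

lemma perm_card:
  fixes n k \<sigma> f :: nat
  assumes n: "n = 2 ^ k" and o: "odd \<sigma>"
  shows "card {b. b < n \<and> P (nat (perm_pi n \<sigma> b f))} = card {x. x < n \<and> P x}"
proof -
  let ?g = "\<lambda>b. nat (perm_pi n \<sigma> b f)"
  have inj: "inj_on ?g {..<n}" by (rule perm_inj[OF n o])
  have np: "int n > 0" using n by simp
  have sub: "?g ` {..<n} \<subseteq> {..<n}"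
    using np by (auto simp: perm_pi_def nat_less_iff)
  have im: "?g ` {..<n} = {..<n}" by (rule endo_inj_surj[OF _ sub inj]) simp
  have "{x. x < n \<and> P x} = ?g ` {b. b < n \<and> P (?g b)}"
  proof
    show "{x. x < n \<and> P x} \<subseteq> ?g ` {b. b < n \<and> P (?g b)}"
    proof
      fix x assume "x \<in> {x. x < n \<and> P x}"
      hence "x \<in> ?g ` {..<n}" "P x" using im by auto
      thus "x \<in> ?g ` {b. b < n \<and> P (?g b)}" by auto
    qed
    show "?g ` {b. b < n \<and> P (?g b)} \<subseteq> {x. x < n \<and> P x}" using sub by auto
  qed
  moreover have "inj_on ?g {b. b < n \<and> P (?g b)}" by (rule inj_on_subset[OF inj]) auto
  ultimately show ?thesis by (simp add: card_image)
qed

definition ee :: "int \<Rightarrow> int \<Rightarrow> int" where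
  "ee L x = x - L * ((2*x + L) div (2*L))"

lemma ee_bounds:
  assumes "L > 0"
  shows "-L \<le> 2 * ee L x" "2 * ee L x < L"
proof -
  have "2*x + L = 2*L * ((2*x + L) div (2*L)) + (2*x + L) mod (2*L)" by simp
  moreover have "0 \<le> (2*x + L) mod (2*L)" "(2*x + L) mod (2*L) < 2*L" using assms by auto
  ultimately show "-L \<le> 2 * ee L x" "2 * ee L x < L" unfolding ee_def by (auto simp: algebra_simps)
qed

lemma ee_cong:
  "L dvd (x - ee L x)"
  unfolding ee_def by simp

lemma hash_eq:
  assumes "n = B * L" "B > 0" "L > 0"
  shows "hash_h n B \<sigma> b f = (2 * perm_pi n \<sigma> b f + int L) div (2 * int L)"
proof -
  let ?x = "perm_pi n \<sigma> b f"
  have "real B / real n * real_of_int ?x + 1/2 = real_of_int (2 * ?x + int L) / real_of_int (2 * int L)"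
    using assms by (simp add: field_simps)
  thus ?thesis unfolding hash_h_def by (simp only: floor_divide_of_int_eq)
qed

lemma bad_imp:
  fixes n B L \<sigma> b f f' :: nat
  assumes nBL: "n = B * L" and B: "B > 0" and L: "L > 0"
    and bad: "\<bar>zrep n (offset_o n B f \<sigma> b f')\<bar> < int L"
  shows "\<exists>y. - int L < y \<and> y < int L \<and>
     int n dvd (int \<sigma> * (int f' - int f) - (y - ee (int L) (perm_pi n \<sigma> b f)))"
proof -
  have np: "int n > 0" using assms by simp
  have nB: "n div B = L" using nBL B by simp
  let ?x = "perm_pi n \<sigma> b f"
  let ?p = "perm_pi n \<sigma> b f'"
  let ?h = "hash_h n B \<sigma> b f"
  define y where "y = zrep n (offset_o n B f \<sigma> b f')"
  have ho: "?h = (2 * ?x + int L) div (2 * int L)" by (rule hash_eq[OF nBL B L])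
  have oo: "int (offset_o n B f \<sigma> b f') = (?p - int L * ?h) mod int n"
    unfolding offset_o_def nB using np by simp
  have d1: "int n dvd (y - int (offset_o n B f \<sigma> b f'))"
    unfolding y_def zrep_def by auto
  have d2: "int n dvd (int (offset_o n B f \<sigma> b f') - (?p - int L * ?h))"
    unfolding oo by (simp add: mod_eq_dvd_iff[symmetric])
  have d3: "int n dvd (?p - int \<sigma> * (int f' - int b))"
    unfolding perm_pi_def by (simp add: mod_eq_dvd_iff[symmetric])
  have d4: "int n dvd (?x - int \<sigma> * (int f - int b))"
    unfolding perm_pi_def by (simp add: mod_eq_dvd_iff[symmetric])
  have eq: "int \<sigma> * (int f' - int f) - (y - ee (int L) ?x) =
     - ((y - int (offset_o n B f \<sigma> b f')) + (int (offset_o n B f \<sigma> b f') - (?p - int L * ?h))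
        + (?p - int \<sigma> * (int f' - int b)) - (?x - int \<sigma> * (int f - int b)))"
    unfolding ee_def ho[symmetric] by (simp add: algebra_simps)
  have "int n dvd (int \<sigma> * (int f' - int f) - (y - ee (int L) ?x))"
    unfolding eq dvd_minus_iff by (rule dvd_diff[OF dvd_add[OF dvd_add[OF d1 d2] d3] d4])
  moreover have "- int L < y" "y < int L" using bad unfolding y_def by auto
  ultimately show ?thesis by blast
qed

lemma pm_arith:
  fixes L P y e :: int
  assumes "L > 0" "L \<le> P" "2*P dvd (y - e - P)" "-L < y" "y < L" "-L \<le> 2*e" "2*e < L"
  shows "(y - e = P \<or> y - e = -P) \<and> 2*P < 3*L"
proof -
  obtain q where q: "y - e - P = 2*P*q" using assms(3) by (auto elim: dvdE)
  have P0: "P > 0" using assms by simp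
  have "q = 0 \<or> q = -1"
  proof (rule ccontr)
    assume "\<not> (q = 0 \<or> q = -1)"
    hence "q \<ge> 1 \<or> q \<le> -2" by auto
    thus False
    proof
      assume "q \<ge> 1"
      hence "2*P*q \<ge> 2*P*1" using P0 by (intro mult_left_mono) auto
      thus False using q assms by linarith
    next
      assume "q \<le> -2"
      hence "2*P*q \<le> 2*P*(-2)" using P0 by (intro mult_left_mono) auto
      thus False using q assms by linarith
    qed
  qed
  thus ?thesis using q assms by auto
qed

lemma uniq_arith:
  fixes L P y y0 e :: int
  assumes "L \<le> P" "y - e = P \<or> y - e = -P" "y0 - e = P \<or> y0 - e = -P"
    "-L < y" "y < L" "-L < y0" "y0 < L"
  shows "y = y0"
  using assms by linarith

lemma two_pow_decomp:
  fixes z :: int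
  assumes "z \<noteq> 0"
  shows "\<exists>s u. z = 2^s * u \<and> odd u"
  using assms
proof (induction "nat \<bar>z\<bar>" arbitrary: z rule: less_induct)
  case less
  show ?case
  proof (cases "odd z")
    case True thus ?thesis by (rule_tac x=0 in exI) auto
  next
    case False
    then obtain w where w: "z = 2 * w" by (auto elim: evenE)
    hence "w \<noteq> 0" "nat \<bar>w\<bar> < nat \<bar>z\<bar>" using less.prems by auto
    from less.hyps[OF this(2) this(1)] obtain s u where "w = 2^s * u" "odd u" by blast
    thus ?thesis using w by (rule_tac x="Suc s" in exI, rule_tac x=u in exI) auto
  qed
qed

lemma card_filter_sum:
  "finite A \<Longrightarrow> (\<Sum>x\<in>A. if P x then (c::nat) else 0) = c * card {x\<in>A. P x}"
  by (simp add: sum.inter_filter[symmetric])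

lemma count_bad:
  fixes n B k j f f' :: nat
  assumes n: "n = 2^k" and B: "B = 2^j" and j1: "1 \<le> j" and jk: "j \<le> k"
    and f: "f < n" "f' < n" "f \<noteq> f'"
  shows "2 * (\<Sum>\<sigma>\<in>odd_res n. card {b. b < n \<and> \<bar>zrep n (offset_o n B f \<sigma> b f')\<bar> < int (n div B)})
     \<le> (2 * (n div B) + 1) * n"
proof -
  define L where "L = n div B"
  have nBL: "n = B * L" unfolding L_def n B using jk
    by (metis le_add_diff_inverse nonzero_mult_div_cancel_left power_add power_not_zero zero_neq_numeral)
  have L: "L = 2^(k-j)" using nBL n B jk
    by (metis le_add_diff_inverse nonzero_mult_div_cancel_left power_add power_not_zero zero_neq_numeral)
  have Lpos: "L > 0" using L by simp
  have Bpos: "B > 0" using B by simp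
  define D where "D = int f' - int f"
  have D0: "D \<noteq> 0" using f unfolding D_def by simp
  obtain s u where su: "D = 2^s * u" "odd u" using two_pow_decomp[OF D0] by blast
  have sk: "s < k"
  proof -
    have "u \<noteq> 0" using su by auto
    hence "(2::int)^s * 1 \<le> 2^s * \<bar>u\<bar>" by (intro mult_left_mono) auto
    also have "\<dots> = \<bar>D\<bar>" using su by (simp add: abs_mult)
    also have "\<bar>D\<bar> < 2^k"
    proof -
      have "int f' < int n" "int f < int n" using f by auto
      moreover have "int n = 2^k" using n by simp
      ultimately show ?thesis unfolding D_def by linarith
    qed
    finally have "(2::int)^s < 2^k" by simp
    thus ?thesis by (simp add: power_strict_increasing_iff)
  qed
  define Bad' where "Bad' \<sigma> x \<longleftrightarrow> (\<exists>y. - int L < y \<and> y < int L \<and>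
     int n dvd (int \<sigma> * D - (y - ee (int L) x)))" for \<sigma> :: nat and x :: int
  define g where "g x y = (if (2::int)^(s+1) dvd (y - ee (int L) x - 2^s) then (2::nat)^s else 0)" for x y :: int
  define I where "I = {- int L<..<int L}"
  have finI: "finite I" unfolding I_def by simp
  have fin_odd: "finite (odd_res n)" unfolding odd_res_def by simp
  have step1: "card {b. b < n \<and> \<bar>zrep n (offset_o n B f \<sigma> b f')\<bar> < int (n div B)}
       \<le> card {x. x < n \<and> Bad' \<sigma> (int x)}" if sg: "\<sigma> \<in> odd_res n" for \<sigma>
  proof -
    have "card {b. b < n \<and> \<bar>zrep n (offset_o n B f \<sigma> b f')\<bar> < int (n div B)}
       \<le> card {b. b < n \<and> Bad' \<sigma> (int (nat (perm_pi n \<sigma> b f)))}"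
    proof (rule card_mono)
      show "finite {b. b < n \<and> Bad' \<sigma> (int (nat (perm_pi n \<sigma> b f)))}" by simp
      have nn: "perm_pi n \<sigma> b f \<ge> 0" for b using n unfolding perm_pi_def by simp
      show "{b. b < n \<and> \<bar>zrep n (offset_o n B f \<sigma> b f')\<bar> < int (n div B)}
         \<subseteq> {b. b < n \<and> Bad' \<sigma> (int (nat (perm_pi n \<sigma> b f)))}"
        using bad_imp[OF nBL Bpos Lpos] nn unfolding Bad'_def D_def L_def[symmetric] by auto
    qed
    also have "\<dots> = card {x. x < n \<and> Bad' \<sigma> (int x)}"
      by (rule perm_card[OF n]) (use sg in \<open>simp add: odd_res_def\<close>)
    finally show ?thesis .
  qed
  have cs: "card {x. x < m \<and> Q x} = (\<Sum>x<m. if Q x then 1 else 0)" for m and Q :: "nat \<Rightarrow> bool"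
    using card_filter_sum[of "{..<m}" Q 1] by simp
  have cs2: "card {x \<in> A. Q x} = (\<Sum>x\<in>A. if Q x then 1 else 0)" if "finite A" for A and Q :: "nat \<Rightarrow> bool"
    using card_filter_sum[OF that, of Q 1] by simp
  have step2: "(\<Sum>\<sigma>\<in>odd_res n. card {x. x < n \<and> Bad' \<sigma> (int x)})
     = (\<Sum>x<n. card {\<sigma> \<in> odd_res n. Bad' \<sigma> (int x)})"
    unfolding cs cs2[OF fin_odd] by (rule sum.swap)
  have step3: "card {\<sigma> \<in> odd_res n. Bad' \<sigma> (int x)} \<le> (\<Sum>y\<in>I. g (int x) y)" for x
  proof -
    have "{\<sigma> \<in> odd_res n. Bad' \<sigma> (int x)} \<subseteq>
       (\<Union>y\<in>I. {\<sigma> \<in> odd_res n. int n dvd (int \<sigma> * (2^s * u) - (y - ee (int L) (int x)))})"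
      unfolding Bad'_def I_def su by auto
    hence "card {\<sigma> \<in> odd_res n. Bad' \<sigma> (int x)} \<le>
       card (\<Union>y\<in>I. {\<sigma> \<in> odd_res n. int n dvd (int \<sigma> * (2^s * u) - (y - ee (int L) (int x)))})"
      by (rule card_mono[rotated]) (simp add: finI fin_odd)
    also have "\<dots> \<le> (\<Sum>y\<in>I. card {\<sigma> \<in> odd_res n. int n dvd (int \<sigma> * (2^s * u) - (y - ee (int L) (int x)))})"
      by (rule card_UN_le[OF finI])
    also have "\<dots> \<le> (\<Sum>y\<in>I. g (int x) y)"
      unfolding g_def by (rule sum_mono, rule card_sigma_le[OF n sk su(2)])
    finally show ?thesis .
  qed
  have main: "2 * (\<Sum>x<n. \<Sum>y\<in>I. g (int x) y) \<le> (2 * L + 1) * n"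
  proof (cases "2^(s+1) \<le> L")
    case True
    have "(2::nat)^(s+1) \<le> 2^(k-j)" using True L by simp
    hence sl: "s + 1 \<le> k - j" using power_increasing_iff[of "2::nat" "s+1" "k-j"] by simp
    have dvdL: "(2::int)^(s+1) dvd int L"
    proof -
      have "(2::nat)^(s+1) dvd L" unfolding L by (rule le_imp_power_dvd[OF sl])
      thus ?thesis by (metis of_nat_dvd_iff of_nat_numeral of_nat_power)
    qed
    have dvdn: "(2::nat)^(s+1) dvd n" unfolding n by (rule le_imp_power_dvd) (use sk in simp)
    have inner: "(\<Sum>x<n. g (int x) y) \<le> 2^s * (n div 2^(s+1))" for y
    proof -
      have "(\<Sum>x<n. g (int x) y) \<le> (\<Sum>x<n. if int (2^(s+1)) dvd (int x - (y - 2^s)) then 2^s else 0)"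
      proof (rule sum_mono)
        fix x assume "x \<in> {..<n}"
        have imp: "int (2^(s+1)) dvd (int x - (y - 2^s))"
          if c: "(2::int)^(s+1) dvd (y - ee (int L) (int x) - 2^s)"
        proof -
          have "(2::int)^(s+1) dvd (int x - ee (int L) (int x))"
            using dvdL ee_cong dvd_trans by blast
          hence "(2::int)^(s+1) dvd (int x - ee (int L) (int x)) - (y - ee (int L) (int x) - 2^s)"
            using c by (rule dvd_diff)
          moreover have "(int x - ee (int L) (int x)) - (y - ee (int L) (int x) - 2^s) = int x - (y - 2^s)"
            by simp
          ultimately show ?thesis by simp
        qed
        show "g (int x) y \<le> (if int (2^(s+1)) dvd (int x - (y - 2^s)) then 2^s else 0)"
          unfolding g_def using imp by auto
      qed
      also have "\<dots> = 2^s * card {x \<in> {..<n}. int (2^(s+1)) dvd (int x - (y - 2^s))}"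
        by (rule card_filter_sum) simp
      also have "\<dots> \<le> 2^s * (n div 2^(s+1))"
      proof -
        have "card {x \<in> {..<n}. int (2^(s+1)) dvd (int x - (y - 2^s))} \<le> n div 2^(s+1)"
          using card_cong_le[of "2^(s+1)" n "y - 2^s"] dvdn by simp
        thus ?thesis by simp
      qed
      finally show ?thesis .
    qed
    have cI: "card I = 2 * L - 1" unfolding I_def using Lpos by simp
    have "(\<Sum>x<n. \<Sum>y\<in>I. g (int x) y) = (\<Sum>y\<in>I. \<Sum>x<n. g (int x) y)" by (rule sum.swap)
    also have "\<dots> \<le> (\<Sum>y\<in>I. 2^s * (n div 2^(s+1)))" by (rule sum_mono) (rule inner)
    also have "\<dots> = (2 * L - 1) * (2^s * (n div 2^(s+1)))" using cI by simp
    finally have le: "(\<Sum>x<n. \<Sum>y\<in>I. g (int x) y) \<le> (2 * L - 1) * (2^s * (n div 2^(s+1)))" .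
    have "2 * (2^s * (n div 2^(s+1))) = n" using dvdn by (simp add: mult.assoc[symmetric])
    hence "2 * ((2 * L - 1) * (2^s * (n div 2^(s+1)))) = (2 * L - 1) * n" by (metis mult.left_commute)
    moreover have "(2 * L - 1) * n \<le> (2 * L + 1) * n" by (intro mult_right_mono) auto
    ultimately show ?thesis using le by linarith
  next
    case False
    have "(2::nat)^(k-j) < 2^(s+1)" using False L by (simp only: not_le)
    hence "k - j < s + 1" using power_strict_increasing_iff[of "2::nat" "k-j" "s+1"] by simp
    hence "(2::nat)^(k-j) \<le> 2^s" using power_increasing_iff[of "2::nat" "k-j" s] by simp
    hence LleN: "L \<le> 2^s" using L by simp
    hence Lle: "int L \<le> 2^s" by (metis of_nat_le_iff of_nat_numeral of_nat_power)
    have per: "(\<Sum>y\<in>I. g (int x) y) \<le> L" for x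
    proof -
      define e where "e = ee (int L) (int x)"
      have eb: "- int L \<le> 2 * e" "2 * e < int L" unfolding e_def using ee_bounds Lpos by auto
      define Y where "Y = {y \<in> I. (2::int)^(s+1) dvd (y - e - 2^s)}"
      have "(\<Sum>y\<in>I. g (int x) y) = 2^s * card Y"
        unfolding g_def Y_def e_def by (rule card_filter_sum[OF finI])
      also have "\<dots> \<le> L"
      proof (cases "Y = {}")
        case True thus ?thesis by simp
      next
        case False
        then obtain y0 where y0: "y0 \<in> Y" by blast
        have pm: "(y - e = (2::int)^s \<or> y - e = -((2::int)^s)) \<and> 2 * (2::int)^s < 3 * int L" if "y \<in> Y" for y
        proof (rule pm_arith)
          show "(2 * (2::int)^s) dvd (y - e - 2^s)" using that unfolding Y_def by simp
          show "- int L < y" "y < int L" using that unfolding Y_def I_def by auto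
        qed (use Lpos Lle eb in auto)
        have "2 * (2::int)^s < 3 * int L" using pm[OF y0] by simp
        hence "(2::int)^s < 2 * int L" by linarith
        hence "2^s < 2 * L" by (metis of_nat_less_iff of_nat_mult of_nat_numeral of_nat_power)
        hence "(2::nat)^s < 2^(k-j+1)" using L by simp
        hence "s < k - j + 1" using power_strict_increasing_iff[of "2::nat" s "k-j+1"] by simp
        hence "(2::nat)^s \<le> 2^(k-j)" using power_increasing_iff[of "2::nat" s "k-j"] by simp
        hence "2^s \<le> L" using L by simp
        hence sL: "2^s = L" using LleN by (rule antisym)
        have "Y \<subseteq> {y0}"
        proof
          fix y assume y: "y \<in> Y"
          have "y = y0"
            by (rule uniq_arith[of "int L" "(2::int)^s" y e y0]) (use Lle pm[OF y] pm[OF y0] y y0 in \<open>auto simp: Y_def I_def\<close>)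
          thus "y \<in> {y0}" by simp
        qed
        hence "card Y \<le> card {y0}" by (intro card_mono) simp_all
        hence "card Y \<le> 1" by simp
        thus ?thesis using sL by simp
      qed
      finally show ?thesis .
    qed
    have "(\<Sum>x<n. \<Sum>y\<in>I. g (int x) y) \<le> (\<Sum>x<n. L)" by (rule sum_mono) (rule per)
    hence "(\<Sum>x<n. \<Sum>y\<in>I. g (int x) y) \<le> n * L" by simp
    thus ?thesis by (simp add: algebra_simps)
  qed
  have "2 * (\<Sum>\<sigma>\<in>odd_res n. card {b. b < n \<and> \<bar>zrep n (offset_o n B f \<sigma> b f')\<bar> < int (n div B)})
      \<le> 2 * (\<Sum>\<sigma>\<in>odd_res n. card {x. x < n \<and> Bad' \<sigma> (int x)})"
    using step1 by (intro mult_left_mono sum_mono) auto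
  also have "\<dots> = 2 * (\<Sum>x<n. card {\<sigma> \<in> odd_res n. Bad' \<sigma> (int x)})" by (simp only: step2)
  also have "\<dots> \<le> 2 * (\<Sum>x<n. \<Sum>y\<in>I. g (int x) y)"
    using step3 by (intro mult_left_mono sum_mono) auto
  also have "\<dots> \<le> (2 * L + 1) * n" by (rule main)
  finally show ?thesis unfolding L_def .
qed

lemma card_odd_res:
  assumes "even n"
  shows "card (odd_res n) = n div 2"
proof -
  have "odd_res n = (\<lambda>i. 2*i+1) ` {..<n div 2}"
  proof
    show "odd_res n \<subseteq> (\<lambda>i. 2*i+1) ` {..<n div 2}"
    proof
      fix x assume x: "x \<in> odd_res n"
      hence "x = 2*(x div 2) + 1" "x div 2 < n div 2" using assms
        by (auto simp: odd_res_def elim!: oddE evenE)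
      thus "x \<in> (\<lambda>i. 2*i+1) ` {..<n div 2}" by blast
    qed
    obtain m where m: "n = 2*m" using assms by (auto elim: evenE)
    show "(\<lambda>i. 2*i+1) ` {..<n div 2} \<subseteq> odd_res n"
      using m by (auto simp: odd_res_def)
  qed
  moreover have "inj_on (\<lambda>i::nat. 2*i+1) {..<n div 2}" by (auto simp: inj_on_def)
  ultimately show ?thesis by (simp add: card_image)
qed

theorem lemma5p9:
  fixes n B F d :: nat and G :: "nat \<Rightarrow> real" and \<beta> lam :: real
    and f f' :: nat and sb :: "(nat \<times> nat) list"
  assumes "\<exists>k. n = 2 ^ k" and "\<exists>k. B = 2 ^ k" and "2 \<le> B" and "B \<le> n"
    and "F \<ge> 2" and "even F"
    and "flat_filter n B F G"
    and "d \<ge> 1" and "\<beta> > 0"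
    and "f < n" and "f' < n" and "f \<noteq> f'"
    and "length sb < d" and "lam \<ge> 0"
    and "\<forall>p\<in>set sb. fst p \<in> odd_res n \<and> snd p < n"
  shows "h_r n B F G d \<beta> lam f f' sb \<ge>
    (\<Sum>\<sigma>\<in>odd_res n. \<Sum>b<n. h_r n B F G d \<beta> lam f f' (sb @ [(\<sigma>, b)]))
      / (real (card (odd_res n)) * real n)"
proof -
  obtain k where n: "n = 2^k" using assms(1) by blast
  obtain j where B: "B = 2^j" using assms(2) by blast
  have j1: "1 \<le> j" using assms(3) B by (cases j) auto
  have jk: "j \<le> k" using assms(4) n B power_increasing_iff[of "2::nat" j k] by simp
  define L where "L = n div B"
  have nBL: "n = B * L" unfolding L_def n B using jk
    by (metis le_add_diff_inverse nonzero_mult_div_cancel_left power_add power_not_zero zero_neq_numeral)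
  have npos: "n > 0" using n by simp
  have Bpos: "B > 0" using B by simp
  have Lpos: "L > 0" using nBL npos by (cases L) auto
  have evn: "even n" using n jk j1 by (cases k) auto
  define c where "c = card (odd_res n)"
  have c2: "2 * c = n" using card_odd_res[OF evn] evn unfolding c_def by simp
  have cpos: "c > 0" using c2 npos by simp
  define eps where "eps = flat_eps F"
  have eps0: "0 \<le> eps" "eps \<le> 1" unfolding eps_def flat_eps_def by (auto intro: power_le_one)
  define E where "E = exp (lam * eps)"
  define X where "X = exp (lam * (1 - eps))"
  define p where "p = 2 / real B + 1 / real n"
  define M where "M = Mfun n B F lam"
  have M: "M = E * (p * (X - 1) + 1)" unfolding M_def Mfun_def E_def X_def p_def eps_def by simp
  have X1: "X \<ge> 1" unfolding X_def using eps0 assms(14) by simp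
  have Epos: "E > 0" unfolding E_def by simp
  have ppos: "p \<ge> 0" unfolding p_def by simp
  have "p * (X - 1) \<ge> 0" using ppos X1 by simp
  hence Mpos: "M > 0" unfolding M using Epos by (intro mult_pos_pos) auto
  define bad where "bad \<sigma> b \<longleftrightarrow> \<bar>zrep n (offset_o n B f \<sigma> b f')\<bar> < int L" for \<sigma> b
  define og where "og \<sigma> b = G (offset_o n B f \<sigma> b f')" for \<sigma> b
  have ff: "\<forall>f<n. G f \<le> 1" "\<forall>f<n. real_of_int \<bar>zrep n f\<bar> \<ge> real n / real B \<longrightarrow>
            G f \<le> flat_eps F * (real n / (real B * real_of_int \<bar>zrep n f\<bar>)) ^ (F - 1)"
    using assms(7) unfolding flat_filter_def by auto
  have obound: "exp (lam * og \<sigma> b) \<le> E + E * (X - 1) * (if bad \<sigma> b then 1 else 0)" for \<sigma> b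
  proof -
    let ?o = "offset_o n B f \<sigma> b f'"
    have olt: "?o < n" unfolding offset_o_def using npos by (simp add: nat_less_iff)
    show ?thesis
    proof (cases "bad \<sigma> b")
      case True
      have "og \<sigma> b \<le> 1" using ff(1) olt unfolding og_def by auto
      hence "lam * og \<sigma> b \<le> lam * 1" using assms(14) by (rule mult_left_mono)
      hence "exp (lam * og \<sigma> b) \<le> exp (lam * 1)" by simp
      also have "\<dots> = E * X" unfolding E_def X_def by (simp add: exp_add[symmetric] algebra_simps)
      finally show ?thesis using True by (simp add: algebra_simps)
    next
      case False
      hence zL: "\<bar>zrep n ?o\<bar> \<ge> int L" unfolding bad_def by simp
      have rr: "real n / real B = real L" using nBL Bpos by simp
      have zL': "real_of_int \<bar>zrep n ?o\<bar> \<ge> real L" using zL by linarith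
      have G1: "og \<sigma> b \<le> eps * (real n / (real B * real_of_int \<bar>zrep n ?o\<bar>)) ^ (F - 1)"
        using ff(2) olt zL' rr unfolding og_def eps_def by auto
      have rat: "real n / (real B * real_of_int \<bar>zrep n ?o\<bar>) \<le> 1"
      proof -
        have "real n = real B * real L" using nBL by simp
        also have "\<dots> \<le> real B * real_of_int \<bar>zrep n ?o\<bar>" using zL' by (intro mult_left_mono) auto
        finally have h: "real n \<le> real B * real_of_int \<bar>zrep n ?o\<bar>" .
        moreover have "0 < real n" using npos by simp
        ultimately have "0 < real B * real_of_int \<bar>zrep n ?o\<bar>" by linarith
        thus ?thesis using h by (simp add: divide_le_eq_1)
      qed
      have "(real n / (real B * real_of_int \<bar>zrep n ?o\<bar>)) ^ (F - 1) \<le> 1"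
        using rat by (intro power_le_one) auto
      hence "og \<sigma> b \<le> eps" using G1 eps0 by (metis mult_left_mono mult_cancel_left1 order_trans)
      hence "lam * og \<sigma> b \<le> lam * eps" using assms(14) by (rule mult_left_mono)
      hence "exp (lam * og \<sigma> b) \<le> E" unfolding E_def by simp
      thus ?thesis using False by simp
    qed
  qed
  have cnt: "2 * (\<Sum>\<sigma>\<in>odd_res n. card {b. b < n \<and> bad \<sigma> b}) \<le> (2 * L + 1) * n"
    using count_bad[OF n B j1 jk assms(10,11,12)] unfolding bad_def L_def by simp
  have sumind: "(\<Sum>b<n. (if bad \<sigma> b then 1 else 0 :: real)) = real (card {b. b < n \<and> bad \<sigma> b})" for \<sigma>
  proof -
    have "(\<Sum>b<n. (if bad \<sigma> b then 1 else 0 :: real)) = real (\<Sum>b<n. (if bad \<sigma> b then 1 else 0 :: nat))"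
      unfolding of_nat_sum by (rule sum.cong) auto
    also have "(\<Sum>b<n. (if bad \<sigma> b then 1 else 0 :: nat)) = card {b. b < n \<and> bad \<sigma> b}"
      using card_filter_sum[of "{..<n}" "bad \<sigma>" 1] by simp
    finally show ?thesis .
  qed
  define N where "N = (\<Sum>\<sigma>\<in>odd_res n. card {b. b < n \<and> bad \<sigma> b})"
  have Nb: "real N \<le> p * real c * real n"
  proof -
    have "real (2 * N) \<le> real ((2 * L + 1) * n)" using cnt unfolding N_def by (simp only: of_nat_le_iff)
    hence "2 * real N \<le> (2 * real L + 1) * real n" by (simp add: algebra_simps)
    moreover have "p * real c * real n = (2 * real L + 1) * real n / 2"
    proof -
      have "real n = real B * real L" "real n = 2 * real c" using nBL c2 by (simp, metis of_nat_mult of_nat_numeral)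
      thus ?thesis unfolding p_def using Bpos npos by (simp add: field_simps)
    qed
    ultimately show ?thesis by linarith
  qed
  have sumexp: "(\<Sum>\<sigma>\<in>odd_res n. \<Sum>b<n. exp (lam * og \<sigma> b)) \<le> real c * real n * M"
  proof -
    have "(\<Sum>\<sigma>\<in>odd_res n. \<Sum>b<n. exp (lam * og \<sigma> b))
        \<le> (\<Sum>\<sigma>\<in>odd_res n. \<Sum>b<n. E + E * (X - 1) * (if bad \<sigma> b then 1 else 0))"
      by (intro sum_mono obound)
    also have "\<dots> = (\<Sum>\<sigma>\<in>odd_res n. real n * E + E * (X - 1) * real (card {b. b < n \<and> bad \<sigma> b}))"
      by (simp add: sum.distrib sum_distrib_left[symmetric] sumind)
    also have "\<dots> = real c * real n * E + E * (X - 1) * real N"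
      unfolding N_def c_def by (simp add: sum.distrib sum_distrib_left[symmetric])
    also have "\<dots> \<le> real c * real n * E + E * (X - 1) * (p * real c * real n)"
      using Nb Epos X1 by (intro add_left_mono mult_left_mono) auto
    also have "\<dots> = real c * real n * M" unfolding M by (simp add: algebra_simps)
    finally show ?thesis .
  qed
  define H0 where "H0 = h_r n B F G d \<beta> lam f f' sb"
  have H0pos: "H0 \<ge> 0" unfolding H0_def h_r_def M_def[symmetric] using Mpos by simp
  have hstep: "h_r n B F G d \<beta> lam f f' (sb @ [(\<sigma>, b)]) = H0 / M * exp (lam * og \<sigma> b)" for \<sigma> b
  proof -
    have dd: "d - length sb = Suc (d - length (sb @ [(\<sigma>, b)]))" using assms(13) by simp
    let ?S = "\<Sum>p\<leftarrow>sb. G (offset_o n B f (fst p) (snd p) f')"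
    let ?e = "exp (- lam * \<beta>)"
    let ?m = "M ^ (d - length (sb @ [(\<sigma>, b)]))"
    have sl: "(\<Sum>p\<leftarrow>sb @ [(\<sigma>, b)]. G (offset_o n B f (fst p) (snd p) f')) = ?S + og \<sigma> b"
      by (simp add: og_def)
    have h1: "h_r n B F G d \<beta> lam f f' (sb @ [(\<sigma>, b)]) = ?e * exp (lam * ?S) * exp (lam * og \<sigma> b) * ?m"
      unfolding h_r_def M_def[symmetric] sl by (simp add: distrib_left exp_add)
    have h2: "H0 = ?e * exp (lam * ?S) * ?m * M"
      unfolding H0_def h_r_def M_def[symmetric] dd by simp
    have "H0 / M = ?e * exp (lam * ?S) * ?m" using h2 Mpos by simp
    thus ?thesis using h1 by (simp add: ac_simps)
  qed
  have "(\<Sum>\<sigma>\<in>odd_res n. \<Sum>b<n. h_r n B F G d \<beta> lam f f' (sb @ [(\<sigma>, b)]))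
      = H0 / M * (\<Sum>\<sigma>\<in>odd_res n. \<Sum>b<n. exp (lam * og \<sigma> b))"
    unfolding hstep by (simp add: sum_distrib_left)
  also have "\<dots> \<le> H0 / M * (real c * real n * M)"
    using H0pos Mpos sumexp by (intro mult_left_mono) auto
  also have "\<dots> = H0 * (real c * real n)" using Mpos by simp
  finally have "(\<Sum>\<sigma>\<in>odd_res n. \<Sum>b<n. h_r n B F G d \<beta> lam f f' (sb @ [(\<sigma>, b)]))
      / (real c * real n) \<le> H0"
    using cpos npos by (simp add: divide_le_eq)
  thus ?thesis unfolding H0_def c_def .
qed

end
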